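(* Let $\varepsilon_{large}\ge 0$ and let $I'$ be a set of rectangles such that $\max_{i\in I'}h(i)\le(\frac12+2\varepsilon_{large})N$ and $\max_{i\in I'}w(i)\le(\frac12+2\varepsilon_{large})N$. Then for all $\alpha,\beta$ with $0\le\alpha,\beta\le\frac12-2\varepsilon_{large}$, if $$a(I')\le\Big(\frac12-(\alpha+\beta)\Big(\frac12+2\varepsilon_{large}\Big)-8\varepsilon_{large}^2\Big)N^2,$$ then all rectangles of $I'$ can be packed (without rotations, with pairwise disjoint interiors) into a box of width $(1-\alpha)N$ and height $(1-\beta)N$.
   Context: Rectangles are axis-parallel with width $w(i)$ and height $h(i)$; $a(I')=\sum_{i\in I'}w(i)h(i)$. *)

theory Defs
  imports Complex_Main
begin

definition area :: "('a \<Rightarrow> real) \<Rightarrow> ('a \<Rightarrow> real) \<Rightarrow> 'a set \<Rightarrow> real" where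
  "area w h I = (\<Sum>i\<in>I. w i * h i)"

definition rect_interior :: "real \<Rightarrow> real \<Rightarrow> real \<Rightarrow> real \<Rightarrow> (real \<times> real) set" where
  "rect_interior xi yi wi hi = {xi<..<xi + wi} \<times> {yi<..<yi + hi}"

definition packable :: "('a \<Rightarrow> real) \<Rightarrow> ('a \<Rightarrow> real) \<Rightarrow> 'a set \<Rightarrow> real \<Rightarrow> real \<Rightarrow> bool" where
  "packable w h I W H \<longleftrightarrow>
     (\<exists>x y :: 'a \<Rightarrow> real.
        (\<forall>i\<in>I. 0 \<le> x i \<and> x i + w i \<le> W \<and> 0 \<le> y i \<and> y i + h i \<le> H) \<and>
        (\<forall>i\<in>I. \<forall>j\<in>I. i \<noteq> j \<longrightarrow>
           rect_interior (x i) (y i) (w i) (h i) \<inter> rect_interior (x j) (y j) (w j) (h j) = {}))"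

end

theory Submission
  imports Defs
begin
lemma packable_empty: "packable w h {} u v"
  by (auto simp: packable_def)

lemma packable_single:
  assumes "w i \<le> u" "h i \<le> v" "0 \<le> w i" "0 \<le> h i"
  shows "packable w h {i} u v"
  unfolding packable_def
  by (rule exI[of _ "\<lambda>_. 0"], rule exI[of _ "\<lambda>_. 0"]) (use assms in auto)

lemma packable_mono:
  assumes "packable w h L u v" "u \<le> u'" "v \<le> v'"
  shows "packable w h L u' v'"
proof -
  from assms(1) obtain x y where b: "\<forall>i\<in>L. 0 \<le> x i \<and> x i + w i \<le> u \<and> 0 \<le> y i \<and> y i + h i \<le> v"
    and d: "\<forall>i\<in>L. \<forall>j\<in>L. i \<noteq> j \<longrightarrow>
           rect_interior (x i) (y i) (w i) (h i) \<inter> rect_interior (x j) (y j) (w j) (h j) = {}"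
    unfolding packable_def by blast
  have "\<forall>i\<in>L. 0 \<le> x i \<and> x i + w i \<le> u' \<and> 0 \<le> y i \<and> y i + h i \<le> v'"
    using b assms(2,3) by force
  with d show ?thesis unfolding packable_def by blast
qed

lemma packable_swap:
  assumes "packable w h L u v"
  shows "packable h w L v u"
proof -
  from assms obtain x y where b: "\<forall>i\<in>L. 0 \<le> x i \<and> x i + w i \<le> u \<and> 0 \<le> y i \<and> y i + h i \<le> v"
    and d: "\<forall>i\<in>L. \<forall>j\<in>L. i \<noteq> j \<longrightarrow>
           rect_interior (x i) (y i) (w i) (h i) \<inter> rect_interior (x j) (y j) (w j) (h j) = {}"
    unfolding packable_def by blast
  have "\<forall>i\<in>L. \<forall>j\<in>L. i \<noteq> j \<longrightarrow>
           rect_interior (y i) (x i) (h i) (w i) \<inter> rect_interior (y j) (x j) (h j) (w j) = {}"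
  proof (intro ballI impI)
    fix i j assume ij: "i \<in> L" "j \<in> L" "i \<noteq> j"
    show "rect_interior (y i) (x i) (h i) (w i) \<inter> rect_interior (y j) (x j) (h j) (w j) = {}"
    proof (rule ccontr)
      assume "rect_interior (y i) (x i) (h i) (w i) \<inter> rect_interior (y j) (x j) (h j) (w j) \<noteq> {}"
      then obtain p q where "(p,q) \<in> rect_interior (y i) (x i) (h i) (w i)" "(p,q) \<in> rect_interior (y j) (x j) (h j) (w j)"
        by auto
      then have "(q,p) \<in> rect_interior (x i) (y i) (w i) (h i) \<inter> rect_interior (x j) (y j) (w j) (h j)"
        by (auto simp: rect_interior_def)
      with d ij show False by blast
    qed
  qed
  with b show ?thesis unfolding packable_def by (intro exI[of _ y] exI[of _ x]) auto
qed

lemma packable_vsplit: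
  assumes p1: "packable w h L1 x0 v" and p2: "packable w h L2 (u - x0) v"
    and dis: "L1 \<inter> L2 = {}" and x0: "0 \<le> x0" "x0 \<le> u"
  shows "packable w h (L1 \<union> L2) u v"
proof -
  from p1 obtain x1 y1 where b1: "\<forall>i\<in>L1. 0 \<le> x1 i \<and> x1 i + w i \<le> x0 \<and> 0 \<le> y1 i \<and> y1 i + h i \<le> v"
    and d1: "\<forall>i\<in>L1. \<forall>j\<in>L1. i \<noteq> j \<longrightarrow>
           rect_interior (x1 i) (y1 i) (w i) (h i) \<inter> rect_interior (x1 j) (y1 j) (w j) (h j) = {}"
    unfolding packable_def by blast
  from p2 obtain x2 y2 where b2: "\<forall>i\<in>L2. 0 \<le> x2 i \<and> x2 i + w i \<le> u - x0 \<and> 0 \<le> y2 i \<and> y2 i + h i \<le> v"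
    and d2: "\<forall>i\<in>L2. \<forall>j\<in>L2. i \<noteq> j \<longrightarrow>
           rect_interior (x2 i) (y2 i) (w i) (h i) \<inter> rect_interior (x2 j) (y2 j) (w j) (h j) = {}"
    unfolding packable_def by blast
  define X where "X i = (if i \<in> L1 then x1 i else x0 + x2 i)" for i
  define Y where "Y i = (if i \<in> L1 then y1 i else y2 i)" for i
  have B: "\<forall>i\<in>L1 \<union> L2. 0 \<le> X i \<and> X i + w i \<le> u \<and> 0 \<le> Y i \<and> Y i + h i \<le> v"
    using b1 b2 x0 by (auto simp: X_def Y_def)
  have sep: "rect_interior (X i) (Y i) (w i) (h i) \<inter> rect_interior (X j) (Y j) (w j) (h j) = {}"
    if "i \<in> L1" "j \<in> L2" for i j
  proof -
    have "X i + w i \<le> x0" using b1 that by (auto simp: X_def)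
    moreover have "x0 \<le> X j" using b2 that dis by (auto simp: X_def)
    ultimately show ?thesis by (auto simp: rect_interior_def)
  qed
  have D: "\<forall>i\<in>L1 \<union> L2. \<forall>j\<in>L1 \<union> L2. i \<noteq> j \<longrightarrow>
           rect_interior (X i) (Y i) (w i) (h i) \<inter> rect_interior (X j) (Y j) (w j) (h j) = {}"
  proof (intro ballI impI)
    fix i j assume i: "i \<in> L1 \<union> L2" and j: "j \<in> L1 \<union> L2" and ij: "i \<noteq> j"
    show "rect_interior (X i) (Y i) (w i) (h i) \<inter> rect_interior (X j) (Y j) (w j) (h j) = {}"
    proof (cases "i \<in> L1")
      case True
      show ?thesis
      proof (cases "j \<in> L1")
        case True
        with \<open>i \<in> L1\<close> d1 ij show ?thesis by (simp add: X_def Y_def)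
      next
        case False
        with j have "j \<in> L2" by auto
        with sep \<open>i \<in> L1\<close> show ?thesis by blast
      qed
    next
      case False
      with i have i2: "i \<in> L2" by auto
      show ?thesis
      proof (cases "j \<in> L1")
        case True
        with sep i2 show ?thesis by blast
      next
        case False
        with j have j2: "j \<in> L2" by auto
        show ?thesis
        proof (rule ccontr)
          assume "rect_interior (X i) (Y i) (w i) (h i) \<inter> rect_interior (X j) (Y j) (w j) (h j) \<noteq> {}"
          then obtain p q where "(p,q) \<in> rect_interior (X i) (Y i) (w i) (h i)" "(p,q) \<in> rect_interior (X j) (Y j) (w j) (h j)"
            by auto
          then have "(p - x0,q) \<in> rect_interior (x2 i) (y2 i) (w i) (h i) \<inter> rect_interior (x2 j) (y2 j) (w j) (h j)"
            using \<open>i \<notin> L1\<close> \<open>j \<notin> L1\<close> by (auto simp: rect_interior_def X_def Y_def)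
          with d2 i2 j2 ij show False by blast
        qed
      qed
    qed
  qed
  show ?thesis unfolding packable_def using B D by blast
qed

lemma packable_hsplit:
  assumes p1: "packable w h L1 u y0" and p2: "packable w h L2 u (v - y0)"
    and dis: "L1 \<inter> L2 = {}" and y0: "0 \<le> y0" "y0 \<le> v"
  shows "packable w h (L1 \<union> L2) u v"
proof -
  have "packable h w (L1 \<union> L2) v u"
    using packable_vsplit[OF packable_swap[OF p1] packable_swap[OF p2] dis y0] .
  from packable_swap[OF this] show ?thesis .
qed

lemma packable_row:
  assumes "finite X" "\<forall>i\<in>X. 0 \<le> w i \<and> 0 \<le> h i \<and> h i \<le> V" "sum w X \<le> U"
  shows "packable w h X U V"
  using assms
proof (induction X arbitrary: U rule: finite_induct)
  case empty
  show ?case by (rule packable_empty)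
next
  case (insert s F)
  have s: "0 \<le> w s" "0 \<le> h s" "h s \<le> V" using insert.prems by auto
  have sF: "0 \<le> sum w F" using insert.prems by (intro sum_nonneg) auto
  have tot: "w s + sum w F \<le> U" using insert.prems insert.hyps by simp
  have p1: "packable w h {s} (w s) V" by (rule packable_single) (use s in auto)
  have p2: "packable w h F (U - w s) V"
    by (rule insert.IH) (use insert.prems tot in auto)
  have "packable w h ({s} \<union> F) U V"
    by (rule packable_vsplit[OF p1 p2]) (use insert.hyps s sF tot in auto)
  then show ?case by simp
qed

lemma subset_sum_interval:
  fixes f :: "'a \<Rightarrow> real"
  assumes "finite N" "s0 \<le> hi" "lo \<le> s0 + sum f N" "\<forall>i\<in>N. 0 \<le> f i \<and> f i \<le> hi - lo"
  shows "\<exists>X\<subseteq>N. lo \<le> s0 + sum f X \<and> s0 + sum f X \<le> hi"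
  using assms
proof (induction N rule: finite_induct)
  case empty
  then show ?case by auto
next
  case (insert z F)
  show ?case
  proof (cases "lo \<le> s0 + sum f F")
    case True
    then obtain X where "X \<subseteq> F" "lo \<le> s0 + sum f X" "s0 + sum f X \<le> hi"
      using insert by auto
    then show ?thesis by blast
  next
    case False
    have "s0 + sum f (insert z F) = s0 + sum f F + f z" using insert.hyps by simp
    moreover have "f z \<le> hi - lo" using insert.prems by auto
    ultimately show ?thesis using False insert.prems
      by (intro exI[of _ "insert z F"]) auto
  qed
qed

definition SC :: "('a \<Rightarrow> real) \<Rightarrow> ('a \<Rightarrow> real) \<Rightarrow> 'a set \<Rightarrow> real \<Rightarrow> real \<Rightarrow> real \<Rightarrow> real \<Rightarrow> bool" where
  "SC w h L u v a b \<longleftrightarrow> finite L \<and> (\<forall>i\<in>L. 0 < w i \<and> 0 < h i \<and> w i \<le> a \<and> h i \<le> b) \<and>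
     a \<le> u \<and> b \<le> v \<and> 2 * area w h L \<le> u * v - max 0 (2*a - u) * max 0 (2*b - v)"

lemma area_swap: "area h w L = area w h L"
proof -
  have "(\<lambda>i. h i * w i) = (\<lambda>i. w i * h i)" by (rule ext) (rule mult.commute)
  then show ?thesis unfolding area_def by (rule arg_cong)
qed

lemma SC_swap1:
  assumes "SC w h L u v a b"
  shows "SC h w L v u b a"
proof -
  have f: "finite L" and p: "\<forall>i\<in>L. 0 < w i \<and> 0 < h i \<and> w i \<le> a \<and> h i \<le> b"
    and au: "a \<le> u" and bv: "b \<le> v"
    and ar: "2 * area w h L \<le> u * v - max 0 (2*a - u) * max 0 (2*b - v)"
    using assms unfolding SC_def by blast+
  have e1: "max 0 (2*b - v) * max 0 (2*a - u) = max 0 (2*a - u) * max 0 (2*b - v)"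
    by (rule mult.commute)
  have e2: "v * u = u * v" by (rule mult.commute)
  have p': "\<forall>i\<in>L. 0 < h i \<and> 0 < w i \<and> h i \<le> b \<and> w i \<le> a" using p by blast
  have ar': "2 * area h w L \<le> v * u - max 0 (2*b - v) * max 0 (2*a - u)"
    using ar unfolding e1 e2 area_swap[of h w L] .
  show ?thesis unfolding SC_def using f p' au bv ar' by blast
qed

lemma SC_swap: "SC h w L v u b a \<longleftrightarrow> SC w h L u v a b"
  using SC_swap1[of w h L u v a b] SC_swap1[of h w L v u b a] by blast

definition IHP :: "'a set \<Rightarrow> bool" where
  "IHP L \<longleftrightarrow> (\<forall>L' (w::'a\<Rightarrow>real) h u v a b. card L' < card L \<longrightarrow> SC w h L' u v a b \<longrightarrow> packable w h L' u v)"

lemma IHP_D: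
  fixes L L' :: "'a set"
  assumes "IHP L" "card L' < card L" "SC w h L' u v a b"
  shows "packable w h L' u v"
  using assms(1) unfolding IHP_def
  apply -
  apply (drule spec[of _ L'], drule spec[of _ w], drule spec[of _ h], drule spec[of _ u],
      drule spec[of _ v], drule spec[of _ a], drule spec[of _ b])
  using assms(2,3) by simp

lemma area_remove: "finite L \<Longrightarrow> r \<in> L \<Longrightarrow> area w h L = w r * h r + area w h (L - {r})"
  unfolding area_def by (simp add: sum.remove)

lemma area_union: "finite A \<Longrightarrow> finite B \<Longrightarrow> A \<inter> B = {} \<Longrightarrow> area w h (A \<union> B) = area w h A + area w h B"
  unfolding area_def by (simp add: sum.union_disjoint)

lemma area_nonneg: "\<forall>i\<in>L. 0 < w i \<and> 0 < h i \<Longrightarrow> 0 \<le> area w h L"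
  unfolding area_def by (intro sum_nonneg) (simp add: less_imp_le)

lemma area_mono:
  assumes "finite L" "A \<subseteq> L" "\<forall>i\<in>L. 0 < w i \<and> 0 < h i"
  shows "area w h A \<le> area w h L"
proof -
  have "\<forall>i\<in>L. 0 \<le> w i * h i" using assms(3) by (simp add: less_imp_le)
  then show ?thesis unfolding area_def using assms(1,2) by (intro sum_mono2) auto
qed

lemma ex_max:
  fixes f :: "'a \<Rightarrow> real"
  assumes "finite L" "L \<noteq> {}"
  shows "\<exists>r\<in>L. \<forall>i\<in>L. f i \<le> f r"
proof -
  have "Max (f ` L) \<in> f ` L" using assms by (intro Max_in) auto
  then obtain r where r: "r \<in> L" "f r = Max (f ` L)" by auto
  have "\<forall>i\<in>L. f i \<le> f r" using assms r by auto
  with r show ?thesis by blast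
qed

lemma Un_remove: "r \<in> L \<Longrightarrow> {r} \<union> (L - {r}) = L" by blast

lemma SO:
  fixes L :: "'a set"
  assumes IH: "IHP L" and sc: "SC w h L u v (w r) (h t)" and r: "r \<in> L"
    and wide: "u \<le> 2 * w r" and fit: "h r + h t \<le> v"
  shows "packable w h L u v"
proof -
  from sc have fin: "finite L" and pos: "\<forall>i\<in>L. 0 < w i \<and> 0 < h i \<and> w i \<le> w r \<and> h i \<le> h t"
    and ru: "w r \<le> u" and tv: "h t \<le> v"
    and ar: "2 * area w h L \<le> u * v - max 0 (2 * w r - u) * max 0 (2 * h t - v)"
    unfolding SC_def by blast+
  have hr: "0 < h r" "0 < w r" using pos r by auto
  define L' where "L' = L - {r}"
  have aL: "area w h L = w r * h r + area w h L'" unfolding L'_def using area_remove[OF fin r] .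
  have m1: "max 0 (2 * w r - u) = 2 * w r - u" using wide by simp
  define q where "q = 2 * h t - v"
  have m2: "max 0 (q + h r) \<le> max 0 q + h r" using hr unfolding max_def by auto
  have m3: "(2*w r - u) * max 0 (q + h r) \<le> (2*w r - u) * (max 0 q + h r)"
    using m2 wide by (intro mult_left_mono) auto
  have m3': "(2*w r - u) * max 0 (q + h r) \<le> (2*w r - u) * max 0 q + (2 * w r - u) * h r"
    using m3 by (simp add: distrib_left)
  have e1: "2 * h t - (v - h r) = q + h r" unfolding q_def by simp
  have ar2: "2 * area w h L' \<le> u * (v - h r) - max 0 (2 * w r - u) * max 0 (2 * h t - (v - h r))"
  proof -
    have A: "max 0 (2 * w r - u) * max 0 (2 * h t - (v - h r)) = (2*w r - u) * max 0 (q + h r)"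
      by (subst e1, subst m1, rule refl)
    have B: "2*area w h L \<le> u*v - (2*w r - u) * max 0 q" using ar m1 q_def by simp
    have C: "u * (v - h r) = u * v - u * h r" by (simp add: algebra_simps)
    have D: "(2 * w r - u) * h r = 2 * (w r * h r) - u * h r" by (simp add: algebra_simps)
    show ?thesis unfolding A C using B m3' D aL by linarith
  qed
  have scL': "SC w h L' u (v - h r) (w r) (h t)"
    unfolding SC_def using fin pos ru tv fit ar2 L'_def by auto
  have cardL': "card L' < card L" using card_Diff1_less[OF fin r] L'_def by simp
  have p1: "packable w h L' u (v - h r)" by (rule IHP_D[OF IH cardL' scL'])
  have p0: "packable w h {r} u (h r)" by (rule packable_single) (use ru hr in auto)
  have "h r \<le> h t" using pos r by auto
  then have "packable w h ({r} \<union> L') u v"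
    by (intro packable_hsplit[OF p0 p1]) (use L'_def hr fit in auto)
  then show ?thesis using Un_remove[OF r] L'_def by simp
qed

lemma wide_contra:
  fixes L :: "'a set"
  assumes sc: "SC w h L u v (w r) (h t)" and r: "r \<in> L" and t: "t \<in> L" and rt: "r \<noteq> t"
    and wide: "u \<le> 2 * w r" and c1: "v < h r + h t" and c2: "u < w t + w r"
  shows False
proof -
  from sc have fin: "finite L" and pos: "\<forall>i\<in>L. 0 < w i \<and> 0 < h i \<and> w i \<le> w r \<and> h i \<le> h t"
    and ar: "2 * area w h L \<le> u * v - max 0 (2 * w r - u) * max 0 (2 * h t - v)"
    unfolding SC_def by blast+
  have pr: "0 < w r" "0 < h r" "h r \<le> h t" and pt: "0 < w t" "0 < h t" using pos r t by auto
  have sub: "{r, t} \<subseteq> L" using r t by auto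
  have "area w h {r,t} \<le> area w h L" by (rule area_mono[OF fin sub]) (use pos in auto)
  moreover have "area w h {r,t} = w r * h r + w t * h t" using rt unfolding area_def by simp
  ultimately have S: "w r * h r + w t * h t \<le> area w h L" by simp
  have m1: "max 0 (2 * w r - u) = 2 * w r - u" using wide by simp
  have m2: "max 0 (2 * h t - v) = 2 * h t - v" using c1 pr by simp
  have i1: "w r * (v - h t) < w r * h r" using c1 pr by (intro mult_strict_left_mono) auto
  have i2: "(u - w r) * h t < w t * h t" using c2 pt by (intro mult_strict_right_mono) auto
  have eq: "u * v - (2 * w r - u) * (2 * h t - v) = 2 * (w r * (v - h t)) + 2 * ((u - w r) * h t)"
    by (simp add: algebra_simps)
  show False using ar S i1 i2 eq unfolding m1 m2 by linarith
qed

lemma BI: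
  fixes L :: "'a set"
  assumes IH: "IHP L" and sc: "SC w h L u v (w r) (h r)" and r: "r \<in> L"
    and wide: "u \<le> 2 * w r" and tall: "v \<le> 2 * h r"
  shows "packable w h L u v"
proof -
  from sc have fin: "finite L" and pos: "\<forall>i\<in>L. 0 < w i \<and> 0 < h i \<and> w i \<le> w r \<and> h i \<le> h r"
    and ru: "w r \<le> u" and rv: "h r \<le> v"
    and ar: "2 * area w h L \<le> u * v - max 0 (2 * w r - u) * max 0 (2 * h r - v)"
    unfolding SC_def by blast+
  have pr: "0 < w r" "0 < h r" using pos r by auto
  have m1: "max 0 (2 * w r - u) = 2 * w r - u" using wide by simp
  have m2: "max 0 (2 * h r - v) = 2 * h r - v" using tall by simp
  define X where "X = {s \<in> L - {r}. v - h r < h s}"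
  define Y where "Y = {s \<in> L - {r}. h s \<le> v - h r}"
  have finX: "finite X" "finite Y" using fin unfolding X_def Y_def by auto
  have LXY: "L = ({r} \<union> X) \<union> Y" using r unfolding X_def Y_def by auto
  have disj: "({r} \<union> X) \<inter> Y = {}" "{r} \<inter> X = {}" unfolding X_def Y_def by auto
  have a1: "area w h (({r} \<union> X) \<union> Y) = area w h ({r} \<union> X) + area w h Y"
    by (rule area_union) (use finX disj in auto)
  have a2: "area w h ({r} \<union> X) = area w h {r} + area w h X"
    by (rule area_union) (use finX disj in auto)
  have a3: "area w h {r} = w r * h r" unfolding area_def by simp
  have aL: "area w h L = w r * h r + area w h X + area w h Y"
    using a1 a2 a3 LXY by simp
  have aX0: "0 \<le> area w h X" "0 \<le> area w h Y"
    using pos unfolding X_def Y_def by (auto intro!: area_nonneg)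
  have sumX: "sum w X \<le> u - w r"
  proof (rule ccontr)
    assume "\<not> sum w X \<le> u - w r"
    then have big: "u - w r < sum w X" by simp
    then have "X \<noteq> {}" using ru by auto
    have "(\<Sum>s\<in>X. w s * (v - h r)) < (\<Sum>s\<in>X. w s * h s)"
      using finX(1) \<open>X \<noteq> {}\<close> pos
      by (intro sum_strict_mono) (auto simp: X_def intro!: mult_strict_left_mono)
    then have "sum w X * (v - h r) < area w h X" unfolding area_def by (simp add: sum_distrib_right)
    moreover have "(u - w r) * (v - h r) \<le> sum w X * (v - h r)"
      using big rv by (intro mult_right_mono) auto
    ultimately have aX: "(u - w r) * (v - h r) < area w h X" by linarith
    have eq: "2 * (w r * h r) + 2 * ((u - w r) * (v - h r)) - (u * v - (2 * w r - u) * (2 * h r - v))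
        = 2 * ((2 * w r - u) * (2 * h r - v))"
      by (simp add: algebra_simps)
    have "0 \<le> (2 * w r - u) * (2 * h r - v)" using wide tall by simp
    then show False using ar aL aX aX0 eq unfolding m1 m2 by linarith
  qed
  have pX: "packable w h X (u - w r) (h r)"
    by (rule packable_row[OF finX(1) _ sumX]) (use pos in \<open>auto simp: X_def less_imp_le\<close>)
  have p0: "packable w h {r} (w r) (h r)" by (rule packable_single) (use pr in auto)
  have pB: "packable w h ({r} \<union> X) u (h r)"
    by (rule packable_vsplit[OF p0 pX disj(2)]) (use pr ru in auto)
  have scY: "SC w h Y u (v - h r) (w r) (v - h r)"
  proof -
    have eq: "(v - h r) * (2 * u - 2 * w r) - (u * v - (2 * w r - u) * (2 * h r - v) - 2 * (w r * h r))
        = 2 * ((2 * w r - u) * (2 * h r - v))"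
      by (simp add: algebra_simps)
    have "0 \<le> (2 * w r - u) * (2 * h r - v)" using wide tall by simp
    moreover have "max 0 (2 * (v - h r) - (v - h r)) = v - h r" using rv by simp
    moreover have "u * (v - h r) - (2 * w r - u) * (v - h r) = (v - h r) * (2 * u - 2 * w r)"
      by (simp add: algebra_simps)
    ultimately have "2 * area w h Y \<le> u * (v - h r) - max 0 (2 * w r - u) * max 0 (2 * (v - h r) - (v - h r))"
    proof -
      assume a: "0 \<le> (2 * w r - u) * (2 * h r - v)" "max 0 (2 * (v - h r) - (v - h r)) = v - h r"
        "u * (v - h r) - (2 * w r - u) * (v - h r) = (v - h r) * (2 * u - 2 * w r)"
      have s1: "2 * area w h Y \<le> u * v - (2 * w r - u) * (2 * h r - v) - 2 * (w r * h r)"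
        using ar aL aX0 unfolding m1 m2 by linarith
      have s2: "u * v - (2 * w r - u) * (2 * h r - v) - 2 * (w r * h r) \<le> (v - h r) * (2 * u - 2 * w r)"
        using eq a(1) by linarith
      show ?thesis unfolding m1 a(2) a(3) using s1 s2 by linarith
    qed
    then show ?thesis unfolding SC_def using finX pos ru unfolding Y_def by auto
  qed
  have cardY: "card Y < card L"
    using fin r unfolding Y_def by (intro psubset_card_mono) auto
  have pY: "packable w h Y u (v - h r)" by (rule IHP_D[OF IH cardY scY])
  have "packable w h (({r} \<union> X) \<union> Y) u v"
    by (rule packable_hsplit[OF pB pY disj(1)]) (use pr rv in auto)
  then show ?thesis using LXY by simp
qed

lemma wide_case:
  fixes L :: "'a set"
  assumes IH: "IHP L" and sc: "SC w h L u v (w r) (h t)" and r: "r \<in> L" and t: "t \<in> L"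
    and wide: "u \<le> 2 * w r"
  shows "packable w h L u v"
proof -
  from sc have pos: "\<forall>i\<in>L. 0 < w i \<and> 0 < h i \<and> w i \<le> w r \<and> h i \<le> h t"
    unfolding SC_def by blast
  have hrt: "h r \<le> h t" "w t \<le> w r" using pos r t by auto
  show ?thesis
  proof (cases "h r + h t \<le> v")
    case True
    then show ?thesis using SO[OF IH sc r wide] by blast
  next
    case False
    have tall: "v \<le> 2 * h t" using False hrt by linarith
    show ?thesis
    proof (cases "w t + w r \<le> u")
      case True
      have sc': "SC h w L v u (h t) (w r)" using sc SC_swap by blast
      have "packable h w L v u" using SO[OF IH sc' t tall True] .
      then show ?thesis by (rule packable_swap)
    next
      case False2: False
      show ?thesis
      proof (cases "r = t")
        case True
        have sc': "SC w h L u v (w r) (h r)" using sc True by simp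
        have tall': "v \<le> 2 * h r" using tall True by simp
        show ?thesis using BI[OF IH sc' r wide tall'] .
      next
        case False3: False
        have "v < h r + h t" "u < w t + w r" using False False2 by auto
        with wide_contra[OF sc r t False3 wide] show ?thesis by blast
      qed
    qed
  qed
qed

lemma pair_ineq1:
  fixes wi hi wj hj u v :: real
  assumes "u < 4*wi" "v < 4*hi" "u < 4*wj" "v < 4*hj" "2*hi < v" "2*hj < v" "0 < u" "0 < v"
    and "wj \<le> wi" and ori: "wi * v \<le> max hi hj * u"
  shows "wi * v \<le> 2*wi*hi + 2*wj*hj"
proof (cases "hj \<le> hi")
  case True
  then have o: "wi * v \<le> hi * u" using ori by (simp add: max_def)
  have pw: "0 < wi" "0 < hi" "0 < wj" "0 < hj" using assms by auto
  have a: "wi * v * (v - 2 * hi) \<le> hi * u * (v - 2 * hi)"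
    using o assms by (intro mult_right_mono) auto
  have b: "hi * (v - 2 * hi) \<le> v^2 / 8"
  proof -
    have sq: "0 \<le> (4*hi - v)^2" by simp
    have e1: "(4*hi - v)^2 = 16*(hi*hi) - 8*(hi*v) + v*v" by (simp add: power2_eq_square algebra_simps)
    have e2: "hi*(v - 2*hi) = hi*v - 2*(hi*hi)" by (simp add: algebra_simps)
    have e3: "v^2 = v*v" by (simp add: power2_eq_square)
    show ?thesis using sq e1 e2 e3 by linarith
  qed
  have b2: "hi * u * (v - 2 * hi) \<le> u * (v^2 / 8)"
    using b \<open>0 < u\<close> by (metis mult.commute mult.left_commute mult_left_mono less_imp_le)
  have c: "u * v < (4 * wj) * (4 * hj)"
    using assms by (intro mult_strict_mono) auto
  have d: "v * (wi * v - 2 * wi * hi) < v * (2 * wj * hj)"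
  proof -
    have "v * (wi * v - 2 * wi * hi) = wi * v * (v - 2 * hi)" by (simp add: algebra_simps)
    also have "\<dots> \<le> u * (v^2 / 8)" using a b2 by linarith
    also have "\<dots> = v * (u * v / 8)" by (simp add: power2_eq_square)
    also have "\<dots> < v * (2 * wj * hj)" using c \<open>0 < v\<close> by (intro mult_strict_left_mono) auto
    finally show ?thesis .
  qed
  then have "wi * v - 2 * wi * hi < 2 * wj * hj" using \<open>0 < v\<close> by (simp add: mult_less_cancel_left)
  then show ?thesis by linarith
next
  case False
  then have o: "wi * v \<le> hj * u" using ori by (simp add: max_def)
  have pw: "0 < wi" "0 < hi" "0 < wj" "0 < hj" using assms by auto
  have a: "wi * v \<le> wi * (4 * hi)" using assms pw by (intro mult_left_mono) auto
  have b: "u * hj \<le> (4 * wj) * hj" using assms pw by (intro mult_right_mono) auto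
  show ?thesis using a b o by (simp add: algebra_simps)
qed

lemma pair_ineq:
  fixes wi hi wj hj u v :: real
  assumes "u < 4*wi" "v < 4*hi" "u < 4*wj" "v < 4*hj" "2*hi < v" "2*hj < v" "0 < u" "0 < v"
    and ori: "max wi wj * v \<le> max hi hj * u"
  shows "max wi wj * v \<le> 2*wi*hi + 2*wj*hj"
proof (cases "wj \<le> wi")
  case True
  then have "wi * v \<le> max hi hj * u" using ori by (simp add: max_def)
  from pair_ineq1[OF assms(1-8) True this] True show ?thesis by (simp add: max_def)
next
  case False
  then have "wj * v \<le> max hj hi * u" using ori max.commute[of hi hj] by (simp add: max_def)
  from pair_ineq1[OF assms(3,4,1,2,6,5,7,8) _ this] False show ?thesis by (simp add: max_def)
qed

lemma pair_col:
  fixes L :: "'a set"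
  assumes IH: "IHP L" and sc: "SC w h L u v (w r) (h t)" and r: "r \<in> L"
    and sw: "2 * w r < u" and st: "2 * h t < v"
    and i: "i \<in> L" and j: "j \<in> L" and ij: "i \<noteq> j"
    and bi: "u < 4 * w i" "v < 4 * h i" and bj: "u < 4 * w j" "v < 4 * h j"
    and ori: "max (w i) (w j) * v \<le> max (h i) (h j) * u"
  shows "packable w h L u v"
proof -
  from sc have fin: "finite L" and pos: "\<forall>i\<in>L. 0 < w i \<and> 0 < h i \<and> w i \<le> w r \<and> h i \<le> h t"
    and ar: "2 * area w h L \<le> u * v - max 0 (2 * w r - u) * max 0 (2 * h t - v)"
    unfolding SC_def by blast+
  have m2: "max 0 (2 * h t - v) = 0" using st by simp
  have ar': "2 * area w h L \<le> u * v" using ar m2 by simp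
  have pr: "0 < w r" "0 < h r" using pos r by auto
  have uv: "0 < u" "0 < v" using pr sw st pos r by (auto intro: less_le_trans)
  have pi: "0 < w i" "0 < h i" "w i \<le> w r" "h i \<le> h t" using pos i by auto
  have pj: "0 < w j" "0 < h j" "w j \<le> w r" "h j \<le> h t" using pos j by auto
  define g where "g = max (w i) (w j)"
  have g: "w i \<le> g" "w j \<le> g" "g \<le> w r" "0 \<le> g" using pi pj unfolding g_def by auto
  have p1: "packable w h {i} g (h i)" by (rule packable_single) (use g pi in auto)
  have p2: "packable w h {j} g (v - h i)" by (rule packable_single) (use g pi pj st in auto)
  have pij: "packable w h ({i} \<union> {j}) g v"
    by (rule packable_hsplit[OF p1 p2]) (use ij pi st in auto)
  define R where "R = L - {i, j}"
  have finR: "finite R" using fin unfolding R_def by auto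
  have aL: "area w h L = w i * h i + w j * h j + area w h R"
  proof -
    have "L = {i, j} \<union> R" using i j unfolding R_def by auto
    then have "area w h L = area w h {i,j} + area w h R"
      using area_union[of "{i,j}" R w h] finR unfolding R_def by auto
    moreover have "area w h {i,j} = w i * h i + w j * h j" using ij unfolding area_def by simp
    ultimately show ?thesis by simp
  qed
  have key: "g * v \<le> 2 * w i * h i + 2 * w j * h j"
    unfolding g_def using pair_ineq[of u "w i" v "h i" "w j" "h j"] bi bj pi pj st uv ori by linarith
  have scR: "SC w h R (u - g) v (w r) (h t)"
  proof -
    have "2 * area w h R \<le> (u - g) * v - max 0 (2 * w r - (u - g)) * max 0 (2 * h t - v)"
      unfolding m2 using ar' aL key by (simp add: algebra_simps)
    moreover have "h t \<le> v" using pos r st by force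
    ultimately show ?thesis unfolding SC_def using finR pos g sw st unfolding R_def by auto
  qed
  have cardR: "card R < card L" using fin i unfolding R_def by (intro psubset_card_mono) auto
  have pR: "packable w h R (u - g) v" by (rule IHP_D[OF IH cardR scR])
  have "packable w h (({i} \<union> {j}) \<union> R) u v"
    by (rule packable_vsplit[OF pij pR]) (use g sw R_def in auto)
  moreover have "({i} \<union> {j}) \<union> R = L" using i j unfolding R_def by auto
  ultimately show ?thesis by simp
qed

lemma vsplit_small:
  fixes L :: "'a set"
  assumes IH: "IHP L" and sc: "SC w h L u v (w r) (h t)" and r: "r \<in> L"
    and sw: "2 * w r < u" and st: "2 * h t < v" and two: "2 \<le> card L"
    and nB: "{i\<in>L. u < 4 * w i} \<noteq> L" and aB: "8 * area w h {i\<in>L. u < 4 * w i} \<le> 3 * u * v"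
  shows "packable w h L u v"
proof -
  from sc have fin: "finite L" and pos: "\<forall>i\<in>L. 0 < w i \<and> 0 < h i \<and> w i \<le> w r \<and> h i \<le> h t"
    and ar: "2 * area w h L \<le> u * v - max 0 (2 * w r - u) * max 0 (2 * h t - v)"
    unfolding SC_def by blast+
  have m2: "max 0 (2 * h t - v) = 0" using st by simp
  have ar': "2 * area w h L \<le> u * v" using ar m2 by simp
  have pr: "0 < w r" "0 < h r" "h r \<le> h t" using pos r by auto
  have uv: "0 < u" "0 < v" using pr sw st by linarith+
  have htv: "h t \<le> v" using pr st by linarith
  define Bw where "Bw = {i\<in>L. u < 4 * w i}"
  define B0 where "B0 = Bw \<union> {r}"
  define N where "N = L - B0"
  have B0L: "B0 \<subseteq> L" using r unfolding B0_def Bw_def by auto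
  have finB0: "finite B0" "finite N" using fin B0L unfolding N_def by (auto intro: finite_subset)
  have LBN: "L = B0 \<union> N" "B0 \<inter> N = {}" using B0L unfolding N_def by auto
  have Nn: "\<forall>s\<in>N. 4 * w s \<le> u \<and> 0 < w s \<and> 0 < h s \<and> h s \<le> h t"
    using pos unfolding N_def B0_def Bw_def by force
  have Nne: "N \<noteq> {}"
  proof (cases "Bw = {}")
    case True
    then have "N = L - {r}" unfolding N_def B0_def by simp
    moreover have "L - {r} \<noteq> {}"
    proof
      assume "L - {r} = {}"
      then have "L \<subseteq> {r}" by auto
      then have "card L \<le> 1" using card_mono[of "{r}" L] by simp
      with two show False by simp
    qed
    ultimately show ?thesis by simp
  next
    case False
    then obtain i where "i \<in> L" "u < 4 * w i" unfolding Bw_def by auto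
    then have "u < 4 * w r" using pos by force
    then have "r \<in> Bw" using r unfolding Bw_def by auto
    then have "B0 = Bw" unfolding B0_def by auto
    then show ?thesis using nB unfolding N_def Bw_def by auto
  qed
  then obtain z0 where z0: "z0 \<in> N" by auto
  define f where "f s = 2 * (w s * h s)" for s
  have fb: "\<forall>s\<in>N. 0 \<le> f s \<and> f s \<le> u * v / 4"
  proof
    fix s assume s: "s \<in> N"
    have a: "w s \<le> u / 4" "h s \<le> v / 2" "0 < w s" "0 < h s" using Nn s st by auto
    have "w s * h s \<le> (u / 4) * (v / 2)" using a by (intro mult_mono) auto
    then show "0 \<le> f s \<and> f s \<le> u * v / 4" unfolding f_def using a by auto
  qed
  define s0 where "s0 = 2 * area w h B0"
  have s0hi: "s0 \<le> 3/4 * u * v"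
  proof (cases "Bw = {}")
    case True
    then have "B0 = {r}" unfolding B0_def by simp
    then have "s0 = 2 * (w r * h r)" unfolding s0_def area_def by simp
    moreover have "4 * w r \<le> u" using True r unfolding Bw_def by auto
    moreover have "w r * h r \<le> (u / 4) * (v / 2)"
      using \<open>4 * w r \<le> u\<close> pr st by (intro mult_mono) auto
    moreover have "0 < u * v" using uv by simp
    moreover have "(u / 4) * (v / 2) = u * v / 8" by simp
    ultimately show ?thesis by linarith
  next
    case False
    then obtain i where "i \<in> L" "u < 4 * w i" unfolding Bw_def by auto
    then have "u < 4 * w r" using pos by force
    then have "r \<in> Bw" using r unfolding Bw_def by auto
    then have "B0 = Bw" unfolding B0_def by auto
    then show ?thesis using aB unfolding s0_def Bw_def by simp
  qed
  define lo where "lo = 2 * area w h L - (u - w r) * v"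
  define hi where "hi = 3/4 * u * v"
  have wrv: "w r * v < u * v / 2" using sw uv by (simp add: mult_strict_right_mono)
  have gap: "u * v / 4 \<le> hi - lo" unfolding hi_def lo_def using ar' wrv by (simp add: algebra_simps)
  define N' where "N' = N - {z0}"
  have finN': "finite N'" using finB0 unfolding N'_def by auto
  have aN: "area w h N = w z0 * h z0 + area w h N'" unfolding N'_def using area_remove[OF finB0(2) z0] .
  have aL: "area w h L = area w h B0 + area w h N" using area_union[OF finB0 LBN(2)] LBN(1) by simp
  have sumf: "sum f X = 2 * area w h X" for X unfolding f_def area_def by (simp add: sum_distrib_left)
  have fz0: "f z0 \<le> (u - w r) * v"
  proof -
    have "f z0 \<le> u * v / 4" using fb z0 by auto
    moreover have "(u - w r) * v = u * v - w r * v" by (simp add: algebra_simps)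
    moreover have "0 < u * v" using uv by simp
    ultimately show ?thesis using wrv by linarith
  qed
  have lo1: "lo \<le> s0 + sum f N'"
    using aN aL fz0 unfolding lo_def s0_def sumf f_def by linarith
  have fbN': "\<forall>i\<in>N'. 0 \<le> f i \<and> f i \<le> hi - lo" using fb gap unfolding N'_def by force
  obtain X where X: "X \<subseteq> N'" "lo \<le> s0 + sum f X" "s0 + sum f X \<le> hi"
    using subset_sum_interval[OF finN' s0hi[folded hi_def] lo1 fbN'] by blast
  define L1 where "L1 = B0 \<union> X"
  define L2 where "L2 = L - L1"
  have XN: "X \<subseteq> N" using X(1) unfolding N'_def by auto
  have finX: "finite X" using finN' X(1) by (rule finite_subset[rotated])
  have L1L: "L1 \<subseteq> L" using B0L XN unfolding L1_def N_def by auto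
  have finL1: "finite L1" "finite L2" using fin L1L unfolding L2_def by (auto intro: finite_subset)
  have aL1: "2 * area w h L1 = s0 + sum f X"
  proof -
    have "B0 \<inter> X = {}" using XN LBN by auto
    then have "area w h L1 = area w h B0 + area w h X" unfolding L1_def using area_union[OF finB0(1) finX] by simp
    then show ?thesis unfolding s0_def sumf by simp
  qed
  have aL12: "area w h L = area w h L1 + area w h L2"
  proof -
    have "L = L1 \<union> L2" "L1 \<inter> L2 = {}" using L1L unfolding L2_def by auto
    then show ?thesis using area_union[OF finL1] by simp
  qed
  have L2N: "L2 \<subseteq> N" using LBN unfolding L2_def L1_def by auto
  have z0L2: "z0 \<in> L2" using z0 X(1) LBN unfolding L2_def L1_def N'_def by auto
  have rL1: "r \<in> L1" unfolding L1_def B0_def by auto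
  define x0 where "x0 = max (w r) (2 * area w h L1 / v)"
  have x0a1: "w r \<le> x0" "2 * area w h L1 / v \<le> x0" unfolding x0_def by simp_all
  have x0a: "w r \<le> x0" "2 * area w h L1 \<le> x0 * v"
    using x0a1 uv by (simp_all add: pos_divide_le_eq)
  have x0b: "x0 \<le> 3/4 * u"
  proof -
    have "2 * area w h L1 / v \<le> 3/4 * u" using aL1 X(3) uv unfolding hi_def by (simp add: pos_divide_le_eq algebra_simps)
    moreover have "w r \<le> 3/4 * u" using sw pr by linarith
    ultimately show ?thesis unfolding x0_def by (rule max.boundedI[rotated])
  qed
  have sc1: "SC w h L1 x0 v (w r) (h t)"
    unfolding SC_def m2 using finL1 pos L1L x0a htv by auto
  have ar2: "2 * area w h L2 \<le> (u - x0) * v"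
  proof (cases "w r \<le> 2 * area w h L1 / v")
    case True
    then have "x0 = 2 * area w h L1 / v" unfolding x0_def by simp
    then have "(u - x0) * v = u * v - 2 * area w h L1" using uv by (simp add: algebra_simps)
    then show ?thesis using aL12 ar' by linarith
  next
    case False
    then have "x0 = w r" unfolding x0_def by simp
    then show ?thesis using aL12 aL1 X(2) unfolding lo_def by (simp add: algebra_simps)
  qed
  have sc2: "SC w h L2 (u - x0) v (u / 4) (h t)"
  proof -
    have "\<forall>s\<in>L2. 4 * w s \<le> u \<and> 0 < w s \<and> 0 < h s \<and> h s \<le> h t" using Nn L2N by blast
    then show ?thesis unfolding SC_def m2 using finL1 x0b htv ar2 by auto
  qed
  have c1: "card L1 < card L" using fin L1L z0L2 unfolding L2_def by (intro psubset_card_mono) auto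
  have c2: "card L2 < card L" using fin rL1 r unfolding L2_def by (intro psubset_card_mono) auto
  have p1: "packable w h L1 x0 v" by (rule IHP_D[OF IH c1 sc1])
  have p2: "packable w h L2 (u - x0) v" by (rule IHP_D[OF IH c2 sc2])
  have "packable w h (L1 \<union> L2) u v"
    by (rule packable_vsplit[OF p1 p2]) (use x0a x0b pr uv L2_def in auto)
  moreover have "L1 \<union> L2 = L" using L1L unfolding L2_def by auto
  ultimately show ?thesis by simp
qed

lemma small_case:
  fixes L :: "'a set"
  assumes IH: "IHP L" and sc: "SC w h L u v (w r) (h t)" and r: "r \<in> L" and t: "t \<in> L"
    and sw: "2 * w r < u" and st: "2 * h t < v"
  shows "packable w h L u v"
proof -
  from sc have fin: "finite L" and pos: "\<forall>i\<in>L. 0 < w i \<and> 0 < h i \<and> w i \<le> w r \<and> h i \<le> h t"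
    and ar: "2 * area w h L \<le> u * v - max 0 (2 * w r - u) * max 0 (2 * h t - v)"
    and ru: "w r \<le> u" and tv: "h t \<le> v"
    unfolding SC_def by blast+
  have m2: "max 0 (2 * h t - v) = 0" using st by simp
  have ar': "2 * area w h L \<le> u * v" using ar m2 by simp
  have pr: "0 < w r" "0 < h r" "h r \<le> h t" using pos r by auto
  have uv: "0 < u" "0 < v" using pr sw st by linarith+
  show ?thesis
  proof (cases "card L \<le> 1")
    case True
    then have "\<forall>a\<in>L. \<forall>b\<in>L. a = b" using fin card_le_Suc0_iff_eq by auto
    then have "L = {r}" using r by blast
    then show ?thesis using packable_single[of w r u h v] pr ru tv by simp
  next
    case False
    then have two: "2 \<le> card L" by simp
    define D where "D = {i\<in>L. u < 4 * w i \<and> v < 4 * h i}"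
    show ?thesis
    proof (cases "\<exists>i\<in>D. \<exists>j\<in>D. i \<noteq> j")
      case True
      then obtain i j where ij: "i \<in> L" "j \<in> L" "i \<noteq> j" "u < 4 * w i" "v < 4 * h i" "u < 4 * w j" "v < 4 * h j"
        unfolding D_def by blast
      show ?thesis
      proof (cases "max (w i) (w j) * v \<le> max (h i) (h j) * u")
        case True
        then show ?thesis using pair_col[OF IH sc r sw st ij] by blast
      next
        case False
        have sc': "SC h w L v u (h t) (w r)" using sc SC_swap by blast
        have "packable h w L v u"
          by (rule pair_col[OF IH sc' t st sw ij(1,2,3,5,4,7,6)]) (use False in linarith)
        then show ?thesis by (rule packable_swap)
      qed
    next
      case False
      then have sub: "\<forall>i\<in>D. \<forall>j\<in>D. i = j" by blast
      define Bw where "Bw = {i\<in>L. u < 4 * w i}"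
      define Bh where "Bh = {i\<in>L. v < 4 * h i}"
      have DBB: "D = Bw \<inter> Bh" unfolding D_def Bw_def Bh_def by auto
      have finB: "finite Bw" "finite Bh" "finite D" using fin unfolding Bw_def Bh_def D_def by auto
      have posL: "\<forall>i\<in>L. 0 < w i \<and> 0 < h i" using pos by blast
      have aD: "area w h D < u * v / 4"
      proof (cases "D = {}")
        case True
        then show ?thesis using uv unfolding area_def by simp
      next
        case False
        then obtain p where p: "p \<in> D" by auto
        then have "D = {p}" using sub by auto
        then have "area w h D = w p * h p" unfolding area_def by simp
        moreover have "p \<in> L" using p unfolding D_def by auto
        then have "w p * h p < (u / 2) * (v / 2)"
          using pos sw st by (intro mult_strict_mono) force+
        ultimately show ?thesis by simp
      qed
      have aBB: "area w h Bw + area w h Bh = area w h (Bw \<union> Bh) + area w h D"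
        unfolding DBB area_def using sum.union_inter[OF finB(1,2), of "\<lambda>i. w i * h i"] by simp
      have aU: "area w h (Bw \<union> Bh) \<le> area w h L"
        by (rule area_mono[OF fin _ posL]) (auto simp: Bw_def Bh_def)
      have aPos: "0 \<le> area w h Bw" "0 \<le> area w h Bh"
        using posL unfolding Bw_def Bh_def by (auto intro!: area_nonneg)
      show ?thesis
      proof (cases "Bw \<noteq> L \<and> 8 * area w h Bw \<le> 3 * u * v")
        case True
        then show ?thesis using vsplit_small[OF IH sc r sw st two] unfolding Bw_def by blast
      next
        case nV: False
        show ?thesis
        proof (cases "Bh \<noteq> L \<and> 8 * area w h Bh \<le> 3 * v * u")
          case True
          have sc': "SC h w L v u (h t) (w r)" using sc SC_swap by blast
          have "area h w Bh = area w h Bh" by (rule area_swap)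
          then have "packable h w L v u"
            using vsplit_small[OF IH sc' t st sw two] True unfolding Bh_def by simp
          then show ?thesis by (rule packable_swap)
        next
          case nH: False
          have "0 < u * v" using uv by simp
          have False
          proof (cases "Bw = L")
            case BwL: True
            then have DBh: "D = Bh" unfolding DBB Bh_def by auto
            show False
            proof (cases "Bh = L")
              case True
              then have "D = L" using DBh by simp
              then have "card L \<le> 1" using sub fin by (simp add: card_le_Suc0_iff_eq)
              with two show False by simp
            next
              case False
              then have "3 * v * u < 8 * area w h Bh" using nH by simp
              then show False using aD DBh \<open>0 < u * v\<close> by (simp add: mult.commute)
            qed
          next
            case BwL: False
            then have aBw: "3 * u * v < 8 * area w h Bw" using nV by simp
            show False
            proof (cases "Bh = L")
              case True
              then have "D = Bw" unfolding DBB Bw_def by auto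
              then show False using aD aBw \<open>0 < u * v\<close> by simp
            next
              case False
              then have "3 * v * u < 8 * area w h Bh" using nH by simp
              then show False using aD aBw aBB aU ar' \<open>0 < u * v\<close> by (simp add: mult.commute)
            qed
          qed
          then show ?thesis ..
        qed
      qed
    qed
  qed
qed

lemma step:
  fixes L :: "'a set"
  assumes IH: "IHP L" and sc: "SC w h L u v a b"
  shows "packable w h L u v"
proof (cases "L = {}")
  case True
  then show ?thesis by (simp add: packable_empty)
next
  case False
  from sc have fin: "finite L" and pos: "\<forall>i\<in>L. 0 < w i \<and> 0 < h i \<and> w i \<le> a \<and> h i \<le> b"
    and au: "a \<le> u" and bv: "b \<le> v"
    and ar: "2 * area w h L \<le> u * v - max 0 (2 * a - u) * max 0 (2 * b - v)"
    unfolding SC_def by blast+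
  obtain r where r: "r \<in> L" "\<forall>i\<in>L. w i \<le> w r" using ex_max[OF fin False, of w] by blast
  obtain t where t: "t \<in> L" "\<forall>i\<in>L. h i \<le> h t" using ex_max[OF fin False, of h] by blast
  have ra: "w r \<le> a" "h t \<le> b" using pos r t by auto
  have mono: "max 0 (2 * w r - u) * max 0 (2 * h t - v) \<le> max 0 (2 * a - u) * max 0 (2 * b - v)"
    using ra by (intro mult_mono) auto
  have sc': "SC w h L u v (w r) (h t)"
    unfolding SC_def using fin pos r t ra au bv ar mono by auto
  show ?thesis
  proof (cases "u \<le> 2 * w r")
    case True
    then show ?thesis using wide_case[OF IH sc' r(1) t(1)] by blast
  next
    case False1: False
    show ?thesis
    proof (cases "v \<le> 2 * h t")
      case True
      have sc'': "SC h w L v u (h t) (w r)" using sc' SC_swap by blast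
      have "packable h w L v u" using wide_case[OF IH sc'' t(1) r(1) True] .
      then show ?thesis by (rule packable_swap)
    next
      case False
      then show ?thesis using small_case[OF IH sc' r(1) t(1)] False1 by linarith
    qed
  qed
qed

theorem steinberg:
  fixes L :: "'a set"
  shows "SC w h L u v a b \<Longrightarrow> packable w h L u v"
proof (induction "card L" arbitrary: L w h u v a b rule: less_induct)
  case less
  have "IHP L" unfolding IHP_def using less.hyps by blast
  then show ?case using step less.prems by blast
qed

theorem mainTheorem15:
  fixes w h :: "'a \<Rightarrow> real" and I :: "'a set" and N eps \<alpha> \<beta> :: real
  assumes "finite I"
    and "N > 0"
    and "\<forall>i\<in>I. w i > 0 \<and> h i > 0"
    and "eps \<ge> 0"
    and "\<forall>i\<in>I. h i \<le> (1/2 + 2*eps) * N"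
    and "\<forall>i\<in>I. w i \<le> (1/2 + 2*eps) * N"
    and "0 \<le> \<alpha>" and "\<alpha> \<le> 1/2 - 2*eps"
    and "0 \<le> \<beta>" and "\<beta> \<le> 1/2 - 2*eps"
    and "area w h I \<le> (1/2 - (\<alpha> + \<beta>) * (1/2 + 2*eps) - 8 * eps^2) * N^2"
  shows "packable w h I ((1 - \<alpha>) * N) ((1 - \<beta>) * N)"
proof -
  define d where "d = (1/2 + 2*eps) * N"
  have au: "d \<le> (1 - \<alpha>) * N" unfolding d_def using assms by (intro mult_right_mono) auto
  have bv: "d \<le> (1 - \<beta>) * N" unfolding d_def using assms by (intro mult_right_mono) auto
  have m1: "max 0 (2 * d - (1 - \<alpha>) * N) = (\<alpha> + 4 * eps) * N"
    unfolding d_def using assms by (simp add: algebra_simps)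
  have m2: "max 0 (2 * d - (1 - \<beta>) * N) = (\<beta> + 4 * eps) * N"
    unfolding d_def using assms by (simp add: algebra_simps)
  have eq: "(1 - \<alpha>) * N * ((1 - \<beta>) * N) - (\<alpha> + 4 * eps) * N * ((\<beta> + 4 * eps) * N)
      = 2 * ((1/2 - (\<alpha> + \<beta>) * (1/2 + 2*eps) - 8 * eps^2) * N^2)"
    by (simp add: algebra_simps power2_eq_square)
  have items: "\<forall>i\<in>I. 0 < w i \<and> 0 < h i \<and> w i \<le> d \<and> h i \<le> d"
    using assms(3,5,6) unfolding d_def by auto
  have ar: "2 * area w h I \<le> (1 - \<alpha>) * N * ((1 - \<beta>) * N)
      - max 0 (2 * d - (1 - \<alpha>) * N) * max 0 (2 * d - (1 - \<beta>) * N)"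
    unfolding m1 m2 eq using assms(11) by linarith
  have "SC w h I ((1 - \<alpha>) * N) ((1 - \<beta>) * N) d d"
    unfolding SC_def using assms(1) items au bv ar by blast
  then show ?thesis by (rule steinberg)
qed

end
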